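(* Let $T>0$, $m_0\in\mathbb R$, let $l:[0,T]\to[0,\infty)$ be continuous and nondecreasing, and let $b:\mathbb R\times[0,\infty)\times[0,T]\to\mathbb R$ be continuous and $L_m$-Lipschitz in its first argument with $L_m\in(0,1)$. For $w\in C[0,T]$ let $M(w)_t=m_0\wedge\inf_{0\le r\le t}w_r$. Then for every $x\in C[0,T]$ the equation $$w_t=x_t-\sup_{s\le t}\big(x_s-b(M(w)_s,l_s,s)\big)^+,\qquad t\in[0,T],$$ has a unique solution $w=\Gamma(x)\in C[0,T]$, and for all $x,x'\in C[0,T]$, $$\|\Gamma(x)-\Gamma(x')\|_\infty\le\frac{2}{1-L_m}\|x-x'\|_\infty.$$
   Context: $C[0,T]$ denotes the space of real continuous functions on $[0,T]$ with the supremum norm $\|\cdot\|_\infty$; $(z)^+=\max(z,0)$. *)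

theory Defs
  imports "HOL-Analysis.Analysis"
begin

text \<open>Functions in C[0,T] are represented as real => real, only values on {0..T} matter.\<close>

definition supnorm :: "real \<Rightarrow> (real \<Rightarrow> real) \<Rightarrow> real" where
  "supnorm T f = (SUP t\<in>{0..T}. \<bar>f t\<bar>)"

definition runmin :: "real \<Rightarrow> (real \<Rightarrow> real) \<Rightarrow> real \<Rightarrow> real" where
  "runmin m0 w t = min m0 (INF r\<in>{0..t}. w r)"

definition solves_eq ::
  "real \<Rightarrow> real \<Rightarrow> (real \<Rightarrow> real \<Rightarrow> real \<Rightarrow> real) \<Rightarrow> (real \<Rightarrow> real)
     \<Rightarrow> (real \<Rightarrow> real) \<Rightarrow> (real \<Rightarrow> real) \<Rightarrow> bool" where
  "solves_eq T m0 b l x w \<longleftrightarrow>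
     (\<forall>t\<in>{0..T}. w t = x t - (SUP s\<in>{0..t}. max (x s - b (runmin m0 w s) (l s) s) 0))"

end

theory Submission imports Defs begin
lemma bdd_cont:
  fixes f :: "real \<Rightarrow> real"
  assumes "continuous_on {0..T} f" "t \<le> T"
  shows "bdd_above (f ` {0..t})" "bdd_below (f ` {0..t})"
proof -
  have "bounded (f ` {0..T})"
    by (rule compact_imp_bounded, rule compact_continuous_image[OF assms(1)]) simp
  moreover have "f ` {0..t} \<subseteq> f ` {0..T}" using assms(2) by auto
  ultimately have "bounded (f ` {0..t})" using bounded_subset by blast
  then show "bdd_above (f ` {0..t})" "bdd_below (f ` {0..t})"
    by (auto intro: bounded_imp_bdd_above bounded_imp_bdd_below)
qed

lemma runsup_cont:
  fixes f :: "real \<Rightarrow> real"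
  assumes f: "continuous_on {0..T} f"
  shows "continuous_on {0..T} (\<lambda>t. SUP s\<in>{0..t}. f s)"
proof -
  let ?F = "\<lambda>t. SUP s\<in>{0..t}. f s"
  have uc: "uniformly_continuous_on {0..T} f"
    using compact_uniformly_continuous[OF f] by simp
  have key: "\<bar>?F t' - ?F t\<bar> \<le> e" if "0 \<le> t" "t \<le> t'" "t' \<le> T" "e > 0"
    "\<And>s. s \<in> {0..T} \<Longrightarrow> dist s t < d \<Longrightarrow> dist (f s) (f t) < e" "t' - t < d" for t t' e d
  proof -
    have b': "bdd_above (f ` {0..t'})" using bdd_cont[OF f that(3)] by simp
    have b: "bdd_above (f ` {0..t})" using bdd_cont[OF f, of t] that by simp
    have "?F t \<le> ?F t'"
      by (rule cSUP_subset_mono) (use that b' in auto)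
    moreover have "?F t' \<le> ?F t + e"
    proof (rule cSUP_least)
      show "{0..t'} \<noteq> {}" using that by auto
      fix s assume s: "s \<in> {0..t'}"
      show "f s \<le> ?F t + e"
      proof (cases "s \<le> t")
        case True
        then have "f s \<le> ?F t" using s b by (intro cSUP_upper) auto
        then show ?thesis using that by linarith
      next
        case False
        then have "dist (f s) (f t) < e" using s that by (intro that(5)) (auto simp: dist_real_def)
        moreover have "f t \<le> ?F t" using that b by (intro cSUP_upper) auto
        ultimately show ?thesis by (auto simp: dist_real_def)
      qed
    qed
    ultimately show ?thesis by linarith
  qed
  show ?thesis
    unfolding continuous_on_iff
  proof (intro ballI allI impI)
    fix t e :: real assume t: "t \<in> {0..T}" and e: "0 < e"
    obtain d where d: "d > 0" "\<And>s s'. s \<in> {0..T} \<Longrightarrow> s' \<in> {0..T} \<Longrightarrow> dist s' s < d \<Longrightarrow> dist (f s') (f s) < e/2"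
      using uc e unfolding uniformly_continuous_on_def by (metis half_gt_zero)
    show "\<exists>d>0. \<forall>t'\<in>{0..T}. dist t' t < d \<longrightarrow> dist (?F t') (?F t) < e"
    proof (intro exI[of _ d] conjI ballI impI)
      fix t' assume t': "t' \<in> {0..T}" "dist t' t < d"
      show "dist (?F t') (?F t) < e"
      proof (cases "t \<le> t'")
        case True
        have "\<bar>?F t' - ?F t\<bar> \<le> e/2"
          by (rule key[of t t' "e/2" d]) (use True t t' e d in \<open>auto simp: dist_real_def\<close>)
        then show ?thesis using e by (simp add: dist_real_def)
      next
        case False
        have "\<bar>?F t - ?F t'\<bar> \<le> e/2"
          by (rule key[of t' t "e/2" d]) (use False t t' e d in \<open>auto simp: dist_real_def\<close>)
        then show ?thesis using e by (simp add: dist_real_def abs_minus_commute)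
      qed
    qed (use d in auto)
  qed
qed

lemma runinf_cont:
  fixes f :: "real \<Rightarrow> real"
  assumes f: "continuous_on {0..T} f"
  shows "continuous_on {0..T} (\<lambda>t. INF s\<in>{0..t}. f s)"
proof -
  have eq: "(INF s\<in>{0..t}. f s) = - (SUP s\<in>{0..t}. - f s)" if "t \<in> {0..T}" for t
  proof -
    have bb: "bdd_below (f ` {0..t})" using bdd_cont[OF f] that by auto
    have ne: "{0..t} \<noteq> {}" using that by auto
    have "(SUP s\<in>{0..t}. - f s) = - (INF s\<in>{0..t}. f s)"
    proof (rule antisym)
      show "(SUP s\<in>{0..t}. - f s) \<le> - (INF s\<in>{0..t}. f s)"
        by (rule cSUP_least[OF ne]) (use cINF_lower[OF bb] in auto)
      show "- (INF s\<in>{0..t}. f s) \<le> (SUP s\<in>{0..t}. - f s)"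
      proof -
        have ba: "bdd_above ((\<lambda>s. - f s) ` {0..t})" using bb
          by (auto simp: bdd_above_def bdd_below_def) (metis neg_le_iff_le)
        have "- (SUP s\<in>{0..t}. - f s) \<le> (INF s\<in>{0..t}. f s)"
          by (rule cINF_greatest[OF ne]) (use cSUP_upper[OF _ ba] in force)
        then show ?thesis by linarith
      qed
    qed
    then show ?thesis by simp
  qed
  have "continuous_on {0..T} (\<lambda>t. - (SUP s\<in>{0..t}. - f s))"
    by (intro continuous_intros runsup_cont) (use f in \<open>auto intro: continuous_intros\<close>)
  then show ?thesis using eq continuous_on_cong by (metis (no_types, lifting))
qed

lemma sup_diff:
  fixes f g :: "real \<Rightarrow> real"
  assumes f: "continuous_on {0..T} f" and g: "continuous_on {0..T} g"
    and t: "0 \<le> t" "t \<le> T" and K: "\<forall>s\<in>{0..t}. \<bar>f s - g s\<bar> \<le> K"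
  shows "\<bar>(SUP s\<in>{0..t}. f s) - (SUP s\<in>{0..t}. g s)\<bar> \<le> K"
proof -
  have ne: "{0..t} \<noteq> {}" using t by auto
  have "(SUP s\<in>{0..t}. f s) \<le> (SUP s\<in>{0..t}. g s) + K"
    by (rule cSUP_least[OF ne]) (smt (verit) K atLeastAtMost_iff bdd_cont(1)[OF g t(2)] cSUP_upper)
  moreover have "(SUP s\<in>{0..t}. g s) \<le> (SUP s\<in>{0..t}. f s) + K"
    by (rule cSUP_least[OF ne]) (smt (verit) K atLeastAtMost_iff bdd_cont(1)[OF f t(2)] cSUP_upper)
  ultimately show ?thesis by linarith
qed

lemma inf_diff:
  fixes f g :: "real \<Rightarrow> real"
  assumes f: "continuous_on {0..T} f" and g: "continuous_on {0..T} g"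
    and t: "0 \<le> t" "t \<le> T" and K: "\<forall>s\<in>{0..t}. \<bar>f s - g s\<bar> \<le> K"
  shows "\<bar>(INF s\<in>{0..t}. f s) - (INF s\<in>{0..t}. g s)\<bar> \<le> K"
proof -
  have ne: "{0..t} \<noteq> {}" using t by auto
  have "(INF s\<in>{0..t}. f s) - K \<le> (INF s\<in>{0..t}. g s)"
    by (rule cINF_greatest[OF ne]) (smt (verit) K atLeastAtMost_iff bdd_cont(2)[OF f t(2)] cINF_lower)
  moreover have "(INF s\<in>{0..t}. g s) - K \<le> (INF s\<in>{0..t}. f s)"
    by (rule cINF_greatest[OF ne]) (smt (verit) K atLeastAtMost_iff bdd_cont(2)[OF g t(2)] cINF_lower)
  ultimately show ?thesis by linarith
qed

definition Phi :: "real \<Rightarrow> (real \<Rightarrow> real \<Rightarrow> real \<Rightarrow> real) \<Rightarrow> (real \<Rightarrow> real) \<Rightarrow> (real \<Rightarrow> real) \<Rightarrow> (real \<Rightarrow> real) \<Rightarrow> real \<Rightarrow> real" where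
  "Phi m0 b l x w t = x t - (SUP s\<in>{0..t}. max (x s - b (runmin m0 w s) (l s) s) 0)"

lemma solves_Phi: "solves_eq T m0 b l x w \<longleftrightarrow> (\<forall>t\<in>{0..T}. w t = Phi m0 b l x w t)"
  unfolding solves_eq_def Phi_def by simp

lemma Phi_loc:
  assumes "\<forall>r\<in>{0..t}. w r = w' r"
  shows "Phi m0 b l x w t = Phi m0 b l x w' t"
proof -
  have "runmin m0 w s = runmin m0 w' s" if "s \<in> {0..t}" for s
    unfolding runmin_def using assms that by (auto intro!: arg_cong[where f="min m0"] INF_cong)
  then show ?thesis unfolding Phi_def by (auto intro!: arg_cong[where f="\<lambda>z. x t - z"] SUP_cong)
qed

locale setting =
  fixes T m0 Lm :: real and l :: "real \<Rightarrow> real"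
    and b :: "real \<Rightarrow> real \<Rightarrow> real \<Rightarrow> real"
  assumes T: "T > 0"
    and lc: "continuous_on {0..T} l" and lpos: "\<forall>t\<in>{0..T}. l t \<ge> 0"
    and bc: "continuous_on (UNIV \<times> {0..} \<times> {0..T}) (\<lambda>(m, y, s). b m y s)"
    and Lm: "0 < Lm" "Lm < 1"
    and Lip: "\<forall>m m' y s. y \<ge> 0 \<longrightarrow> s \<in> {0..T} \<longrightarrow> \<bar>b m y s - b m' y s\<bar> \<le> Lm * \<bar>m - m'\<bar>"
begin

lemma runmin_cont:
  assumes "continuous_on {0..T} w"
  shows "continuous_on {0..T} (runmin m0 w)"
  unfolding runmin_def by (intro continuous_intros runinf_cont assms)

lemma bcomp_cont:
  assumes "continuous_on {0..T} w"
  shows "continuous_on {0..T} (\<lambda>s. b (runmin m0 w s) (l s) s)"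
proof -
  have "continuous_on {0..T} (\<lambda>s. (\<lambda>(m, y, s). b m y s) (runmin m0 w s, l s, s))"
    by (rule continuous_on_compose2[OF bc])
      (use lpos in \<open>auto intro!: continuous_intros runmin_cont assms lc\<close>)
  then show ?thesis by simp
qed

lemma g_cont:
  assumes "continuous_on {0..T} w" "continuous_on {0..T} x"
  shows "continuous_on {0..T} (\<lambda>s. max (x s - b (runmin m0 w s) (l s) s) 0)"
  by (intro continuous_intros bcomp_cont assms)

lemma Phi_cont:
  assumes "continuous_on {0..T} w" "continuous_on {0..T} x"
  shows "continuous_on {0..T} (Phi m0 b l x w)"
  unfolding Phi_def by (intro continuous_intros runsup_cont g_cont assms)

lemma Phi_bound:
  assumes w: "continuous_on {0..T} w" and w': "continuous_on {0..T} w'"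
    and x: "continuous_on {0..T} x" and x': "continuous_on {0..T} x'"
    and K: "\<forall>r\<in>{0..T}. \<bar>w r - w' r\<bar> \<le> K"
    and D: "\<forall>r\<in>{0..T}. \<bar>x r - x' r\<bar> \<le> D"
    and t: "t \<in> {0..T}"
  shows "\<bar>Phi m0 b l x w t - Phi m0 b l x' w' t\<bar> \<le> 2 * D + Lm * K"
proof -
  have rm: "\<bar>runmin m0 w s - runmin m0 w' s\<bar> \<le> K" if s: "s \<in> {0..T}" for s
  proof -
    have "\<bar>(INF r\<in>{0..s}. w r) - (INF r\<in>{0..s}. w' r)\<bar> \<le> K"
      by (rule inf_diff[OF w w']) (use s K in auto)
    then show ?thesis unfolding runmin_def by linarith
  qed
  have gd: "\<bar>max (x s - b (runmin m0 w s) (l s) s) 0 - max (x' s - b (runmin m0 w' s) (l s) s) 0\<bar> \<le> D + Lm * K"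
    if s: "s \<in> {0..T}" for s
  proof -
    have "\<bar>b (runmin m0 w s) (l s) s - b (runmin m0 w' s) (l s) s\<bar> \<le> Lm * \<bar>runmin m0 w s - runmin m0 w' s\<bar>"
      using Lip lpos s by blast
    also have "\<dots> \<le> Lm * K" using rm[OF s] Lm by (intro mult_left_mono) auto
    finally have bb: "\<bar>b (runmin m0 w s) (l s) s - b (runmin m0 w' s) (l s) s\<bar> \<le> Lm * K" .
    have "\<bar>x s - x' s\<bar> \<le> D" using D s by blast
    then show ?thesis using bb by (smt (verit))
  qed
  have "\<bar>(SUP s\<in>{0..t}. max (x s - b (runmin m0 w s) (l s) s) 0) - (SUP s\<in>{0..t}. max (x' s - b (runmin m0 w' s) (l s) s) 0)\<bar> \<le> D + Lm * K"
    by (rule sup_diff[OF g_cont[OF w x] g_cont[OF w' x']]) (use t gd in auto)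
  then show ?thesis unfolding Phi_def using D t by (smt (verit))
qed

lemma supnorm_ge:
  assumes "continuous_on {0..T} f" "t \<in> {0..T}"
  shows "\<bar>f t\<bar> \<le> supnorm T f"
proof -
  have "continuous_on {0..T} (\<lambda>t. \<bar>f t\<bar>)" by (intro continuous_intros assms)
  then have "bdd_above ((\<lambda>t. \<bar>f t\<bar>) ` {0..T})" using bdd_cont(1)[of T _ T] by simp
  then show ?thesis unfolding supnorm_def using assms(2) by (intro cSUP_upper) auto
qed

lemma supnorm_le:
  assumes "\<forall>t\<in>{0..T}. \<bar>f t\<bar> \<le> K"
  shows "supnorm T f \<le> K"
  unfolding supnorm_def using assms T by (intro cSUP_least) auto

definition clamp :: "real \<Rightarrow> real" where "clamp t = max 0 (min T t)"

lemma clamp_in: "clamp t \<in> {0..T}" using T unfolding clamp_def by auto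
lemma clamp_id: "t \<in> {0..T} \<Longrightarrow> clamp t = t" unfolding clamp_def by auto
lemma clamp_cont: "continuous_on UNIV clamp" unfolding clamp_def by (intro continuous_intros)

lemma existence:
  assumes x: "continuous_on {0..T} x"
  shows "\<exists>g :: real \<Rightarrow>\<^sub>C real. solves_eq T m0 b l x (apply_bcontfun g)"
proof -
  define F where "F g = Bcontfun (\<lambda>t. Phi m0 b l x (apply_bcontfun g) (clamp t))" for g :: "real \<Rightarrow>\<^sub>C real"
  have mem: "(\<lambda>t. Phi m0 b l x (apply_bcontfun g) (clamp t)) \<in> bcontfun" for g :: "real \<Rightarrow>\<^sub>C real"
  proof -
    have pc: "continuous_on {0..T} (Phi m0 b l x (apply_bcontfun g))"
      by (rule Phi_cont[OF _ x]) simp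
    have "continuous_on UNIV (\<lambda>t. Phi m0 b l x (apply_bcontfun g) (clamp t))"
      by (rule continuous_on_compose2[OF pc clamp_cont]) (use clamp_in in auto)
    moreover have "bounded (Phi m0 b l x (apply_bcontfun g) ` {0..T})"
      by (rule compact_imp_bounded, rule compact_continuous_image[OF pc]) simp
    then have "bounded (range (\<lambda>t. Phi m0 b l x (apply_bcontfun g) (clamp t)))"
      by (rule bounded_subset) (use clamp_in in auto)
    ultimately show ?thesis unfolding bcontfun_def by auto
  qed
  have Fapp: "apply_bcontfun (F g) t = Phi m0 b l x (apply_bcontfun g) (clamp t)" for g t
    unfolding F_def using mem by (simp add: Bcontfun_inverse)
  have "\<forall>g g'. dist (F g) (F g') \<le> Lm * dist g g'"
  proof (intro allI dist_bound)
    fix g g' :: "real \<Rightarrow>\<^sub>C real" and t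
    have "\<bar>Phi m0 b l x (apply_bcontfun g) (clamp t) - Phi m0 b l x (apply_bcontfun g') (clamp t)\<bar> \<le> 2 * 0 + Lm * dist g g'"
      by (rule Phi_bound) (use x clamp_in dist_bounded[of g _ g'] in \<open>auto simp: dist_real_def\<close>)
    then show "dist (F g t) (F g' t) \<le> Lm * dist g g'" by (simp add: Fapp dist_real_def)
  qed
  then obtain g where g: "F g = g" using banach_fix_type[of Lm F] Lm by auto
  have "\<forall>t\<in>{0..T}. apply_bcontfun g t = Phi m0 b l x (apply_bcontfun g) t"
    using Fapp[of g] clamp_id by (metis g)
  then show ?thesis unfolding solves_Phi by blast
qed

end

theorem mainTheorem8:
  fixes T m0 Lm :: real and l :: "real \<Rightarrow> real"
    and b :: "real \<Rightarrow> real \<Rightarrow> real \<Rightarrow> real"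
  assumes "T > 0"
    and "continuous_on {0..T} l" and "mono_on {0..T} l" and "\<forall>t\<in>{0..T}. l t \<ge> 0"
    and "continuous_on (UNIV \<times> {0..} \<times> {0..T}) (\<lambda>(m, y, s). b m y s)"
    and "0 < Lm" and "Lm < 1"
    and "\<forall>m m' y s. y \<ge> 0 \<longrightarrow> s \<in> {0..T} \<longrightarrow> \<bar>b m y s - b m' y s\<bar> \<le> Lm * \<bar>m - m'\<bar>"
  shows "\<exists>\<Gamma>. (\<forall>x. continuous_on {0..T} x \<longrightarrow>
              continuous_on {0..T} (\<Gamma> x) \<and> solves_eq T m0 b l x (\<Gamma> x) \<and>
              (\<forall>w. continuous_on {0..T} w \<and> solves_eq T m0 b l x w \<longrightarrow>
                   (\<forall>t\<in>{0..T}. w t = \<Gamma> x t)))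
          \<and> (\<forall>x x'. continuous_on {0..T} x \<and> continuous_on {0..T} x' \<longrightarrow>
              supnorm T (\<lambda>t. \<Gamma> x t - \<Gamma> x' t) \<le> 2 / (1 - Lm) * supnorm T (\<lambda>t. x t - x' t))"
proof -
  interpret setting T m0 Lm l b using assms by unfold_locales auto
  define G where "G x = apply_bcontfun (SOME g. solves_eq T m0 b l x (apply_bcontfun g))" for x
  have sol: "solves_eq T m0 b l x (G x)" if "continuous_on {0..T} x" for x
    unfolding G_def using someI_ex[OF existence[OF that]] .
  have Gc: "continuous_on {0..T} (G x)" for x unfolding G_def by simp
  have est: "supnorm T (\<lambda>t. w t - w' t) \<le> 2 * supnorm T (\<lambda>t. x t - x' t) + Lm * supnorm T (\<lambda>t. w t - w' t)"
    if w: "continuous_on {0..T} w" and w': "continuous_on {0..T} w'"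
    and x: "continuous_on {0..T} x" and x': "continuous_on {0..T} x'"
    and sw: "solves_eq T m0 b l x w" and sw': "solves_eq T m0 b l x' w'" for w w' x x'
  proof (rule supnorm_le, intro ballI)
    fix t assume t: "t \<in> {0..T}"
    have "\<bar>Phi m0 b l x w t - Phi m0 b l x' w' t\<bar> \<le> 2 * supnorm T (\<lambda>t. x t - x' t) + Lm * supnorm T (\<lambda>t. w t - w' t)"
      proof (rule Phi_bound[OF w w' x x' _ _ t])
      have c1: "continuous_on {0..T} (\<lambda>t. w t - w' t)" using w w' by (intro continuous_intros)
      have c2: "continuous_on {0..T} (\<lambda>t. x t - x' t)" using x x' by (intro continuous_intros)
      show "\<forall>r\<in>{0..T}. \<bar>w r - w' r\<bar> \<le> supnorm T (\<lambda>t. w t - w' t)"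
        using supnorm_ge[OF c1] by blast
      show "\<forall>r\<in>{0..T}. \<bar>x r - x' r\<bar> \<le> supnorm T (\<lambda>t. x t - x' t)"
        using supnorm_ge[OF c2] by blast
    qed
    then show "\<bar>w t - w' t\<bar> \<le> 2 * supnorm T (\<lambda>t. x t - x' t) + Lm * supnorm T (\<lambda>t. w t - w' t)"
      using sw sw' t unfolding solves_Phi by metis
  qed
  have nn: "0 \<le> supnorm T f" if "continuous_on {0..T} f" for f
    using supnorm_ge[OF that, of 0] T by force
  show ?thesis
  proof (rule exI[of _ G], rule conjI, intro allI impI conjI ballI)
    fix x :: "real \<Rightarrow> real" assume x: "continuous_on {0..T} x"
    show "continuous_on {0..T} (G x)" by (rule Gc)
    show "solves_eq T m0 b l x (G x)" using sol[OF x] .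
    fix w :: "real \<Rightarrow> real" and t assume w: "continuous_on {0..T} w \<and> solves_eq T m0 b l x w" and t: "t \<in> {0..T}"
    have wc: "continuous_on {0..T} (\<lambda>t. w t - G x t)" using w Gc by (intro continuous_intros) auto
    have "supnorm T (\<lambda>t. w t - G x t) \<le> 2 * supnorm T (\<lambda>t. x t - x t) + Lm * supnorm T (\<lambda>t. w t - G x t)"
      using est[OF conjunct1[OF w] Gc x x conjunct2[OF w] sol[OF x]] .
    moreover have "supnorm T (\<lambda>t. x t - x t) = 0" unfolding supnorm_def using T by simp
    ultimately have "supnorm T (\<lambda>t. w t - G x t) \<le> 0"
      using Lm nn[OF wc] by (smt (verit) mult_le_cancel_right1)
    moreover have "\<bar>w t - G x t\<bar> \<le> supnorm T (\<lambda>t. w t - G x t)" using supnorm_ge[OF wc t] by simp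
    ultimately show "w t = G x t" by linarith
  next
    show "\<forall>x x'. continuous_on {0..T} x \<and> continuous_on {0..T} x' \<longrightarrow> supnorm T (\<lambda>t. G x t - G x' t) \<le> 2 / (1 - Lm) * supnorm T (\<lambda>t. x t - x' t)"
    proof (intro allI impI)
    fix x x' :: "real \<Rightarrow> real" assume xx: "continuous_on {0..T} x \<and> continuous_on {0..T} x'"
    let ?K = "supnorm T (\<lambda>t. G x t - G x' t)" and ?D = "supnorm T (\<lambda>t. x t - x' t)"
    have "?K \<le> 2 * ?D + Lm * ?K" using est[OF Gc Gc conjunct1[OF xx] conjunct2[OF xx] sol[OF conjunct1[OF xx]] sol[OF conjunct2[OF xx]]] .
    then have "(1 - Lm) * ?K \<le> 2 * ?D" by (simp add: algebra_simps)
    then show "?K \<le> 2 / (1 - Lm) * ?D" using Lm by (simp add: pos_le_divide_eq mult.commute)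
    qed
  qed
qed

end
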